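(* Let $X$ be a real Banach space and let $E\subset X$ be a weakly compact set having no vector of maximum length (no $e\in E$ with $\|e\|=\sup\{\|e'\|:e'\in E\}$). Then the norm-closed convex hull $\overline{\mathrm{co}}(E)$ has no vector of maximum length. In particular, if $X$ fails the Schur property and $(x_n)_{n\ge1}$ is a sequence of unit vectors in $X$ converging weakly to $0$, then $$K=\overline{\mathrm{co}}\left(\left\{\tfrac{n}{n+1}x_n : n\in\mathbb{N}\right\}\cup\{0\}\right)$$ is a closed bounded convex set that is not remotal from $0$.
   Context: $\overline{\mathrm{co}}(E)$ denotes the norm-closed convex hull of $E$. A Banach space has the Schur property if every weakly convergent sequence is norm convergent. For a bounded set $E$ in a Banach space $Z$ and $z\in Z$, let $D(z,E)=\sup\{\|z-e\|: e\in E\}$; $E$ is remotal from $z$ if there exists $e_0\in E$ with $\|z-e_0\|=D(z,E)$. *)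

theory Defs
  imports "HOL-Analysis.Analysis"
begin

definition weak_topology :: "'a::real_normed_vector topology" where
  "weak_topology = topology_generated_by
     {{x. f x \<in> U} | f U. bounded_linear (f :: 'a \<Rightarrow> real) \<and> open U}"

definition weakly_compact :: "'a::real_normed_vector set \<Rightarrow> bool" where
  "weakly_compact E \<longleftrightarrow> compactin weak_topology E"

definition weakly_convergent_to :: "(nat \<Rightarrow> 'a::real_normed_vector) \<Rightarrow> 'a \<Rightarrow> bool" where
  "weakly_convergent_to x l \<longleftrightarrow>
     (\<forall>f :: 'a \<Rightarrow> real. bounded_linear f \<longrightarrow> (\<lambda>n. f (x n)) \<longlonglongrightarrow> f l)"

definition schur_property :: "'a::real_normed_vector itself \<Rightarrow> bool" where
  "schur_property _ \<longleftrightarrow>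
     (\<forall>(x :: nat \<Rightarrow> 'a) l. weakly_convergent_to x l \<longrightarrow> x \<longlonglongrightarrow> l)"

definition has_max_length_vector :: "'a::real_normed_vector set \<Rightarrow> bool" where
  "has_max_length_vector E \<longleftrightarrow> (\<exists>e\<in>E. \<forall>e'\<in>E. norm e' \<le> norm e)"

definition farthest_dist :: "'a::real_normed_vector \<Rightarrow> 'a set \<Rightarrow> real" where
  "farthest_dist z E = (SUP e\<in>E. norm (z - e))"

definition remotal_from :: "'a::real_normed_vector set \<Rightarrow> 'a \<Rightarrow> bool" where
  "remotal_from E z \<longleftrightarrow> (\<exists>e0\<in>E. norm (z - e0) = farthest_dist z E)"

end

theory Submission
  imports Defs
begin

definition goodG :: "'a::real_normed_vector \<Rightarrow> ('a \<times> real) set \<Rightarrow> bool" where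
  "goodG z G \<longleftrightarrow> (\<forall>x a y b. (x,a)\<in>G \<longrightarrow> (y,b)\<in>G \<longrightarrow> (x+y,a+b)\<in>G)
     \<and> (\<forall>x a c. (x,a)\<in>G \<longrightarrow> (c *\<^sub>R x, c*a)\<in>G)
     \<and> (\<forall>x a. (x,a)\<in>G \<longrightarrow> a \<le> norm x) \<and> (z, norm z) \<in> G"

lemma goodG_fun:
  assumes "goodG z G" "(x,a)\<in>G" "(x,b)\<in>G" shows "a = b"
proof -
  have "(x + (-1) *\<^sub>R x, a + (-1)*b) \<in> G" using assms unfolding goodG_def by blast
  then have 1: "a - b \<le> 0" using assms unfolding goodG_def by fastforce
  have "(x + (-1) *\<^sub>R x, b + (-1)*a) \<in> G" using assms unfolding goodG_def by blast
  then have 2: "b - a \<le> 0" using assms unfolding goodG_def by fastforce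
  from 1 2 show ?thesis by simp
qed

lemma goodG_extend:
  assumes g: "goodG z M" and y: "\<forall>a. (y,a) \<notin> M"
  shows "\<exists>G. goodG z G \<and> M \<subseteq> G \<and> G \<noteq> M"
proof -
  define S where "S = {a - norm (x - y) | x a. (x,a)\<in>M}"
  have Mne: "(z, norm z) \<in> M" using g unfolding goodG_def by blast
  have ub: "s \<le> norm (x' + y) - a'" if sS: "s \<in> S" and xa': "(x',a')\<in>M" for s x' a'
  proof -
    obtain x a where xa: "(x,a)\<in>M" "s = a - norm (x - y)" using sS S_def by blast
    have "(x + x', a + a')\<in>M" using g xa xa' unfolding goodG_def by blast
    then have "a + a' \<le> norm (x + x')" using g unfolding goodG_def by blast
    also have "\<dots> \<le> norm (x - y) + norm (x' + y)"
      using norm_triangle_ineq[of "x - y" "x' + y"] by simp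
    finally show ?thesis using xa by simp
  qed
  define t where "t = Sup S"
  have Sne: "S \<noteq> {}" using Mne S_def by blast
  have bdd: "bdd_above S" using ub Mne unfolding bdd_above_def by blast
  have t_ge: "a - norm (x - y) \<le> t" if "(x,a)\<in>M" for x a
    unfolding t_def using that bdd S_def by (auto intro!: cSup_upper)
  have t_le: "t \<le> norm (x' + y) - a'" if "(x',a')\<in>M" for x' a'
    unfolding t_def using that Sne ub by (auto intro!: cSup_least)
  define G where "G = {(x + c *\<^sub>R y, a + c * t) | x a c. (x,a)\<in>M}"
  have Gin: "(u + c *\<^sub>R y, b + c * t) \<in> G" if "(u,b)\<in>M" for u b c
    unfolding G_def using that by blast
  have bound: "a + c * t \<le> norm (x + c *\<^sub>R y)" if "(x,a)\<in>M" for x a c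
  proof (cases "c = 0")
    case True then show ?thesis using g that unfolding goodG_def by auto
  next
    case False
    show ?thesis
    proof (cases "c > 0")
      case True
      have "((1/c) *\<^sub>R x, (1/c)*a) \<in> M" using g that unfolding goodG_def by blast
      from t_le[OF this] have "t \<le> norm ((1/c) *\<^sub>R x + y) - a/c" by simp
      then have "c * t \<le> c * (norm ((1/c) *\<^sub>R x + y) - a/c)" using True by (simp add: mult_left_mono)
      also have "\<dots> = norm (c *\<^sub>R ((1/c) *\<^sub>R x + y)) - a" using True by (simp add: right_diff_distrib)
      also have "c *\<^sub>R ((1/c) *\<^sub>R x + y) = x + c *\<^sub>R y" using True by (simp add: algebra_simps)
      finally show ?thesis by simp
    next
      case False
      define d where "d = - c"
      have d: "d > 0" using False \<open>c \<noteq> 0\<close> d_def by simp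
      have "((1/d) *\<^sub>R x, (1/d)*a) \<in> M" using g that unfolding goodG_def by blast
      from t_ge[OF this] have "a/d - norm ((1/d) *\<^sub>R x - y) \<le> t" by simp
      then have "d * (a/d - norm ((1/d) *\<^sub>R x - y)) \<le> d * t" using d by (simp add: mult_left_mono)
      moreover have "d * (a/d - norm ((1/d) *\<^sub>R x - y)) = a - norm (d *\<^sub>R ((1/d) *\<^sub>R x - y))"
        using d by (simp add: right_diff_distrib)
      moreover have "d *\<^sub>R ((1/d) *\<^sub>R x - y) = x + c *\<^sub>R y" using d d_def by (simp add: algebra_simps)
      ultimately have "a - norm (x + c *\<^sub>R y) \<le> d * t" by metis
      then show ?thesis unfolding d_def by simp
    qed
  qed
  have "goodG z G"
    unfolding goodG_def
  proof (intro conjI allI impI)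
    fix x a x' a' assume "(x,a)\<in>G" "(x',a')\<in>G"
    then obtain u b c u' b' c' where "(u,b)\<in>M" "(u',b')\<in>M" "x = u + c *\<^sub>R y" "a = b + c*t"
      "x' = u' + c' *\<^sub>R y" "a' = b' + c'*t" unfolding G_def by blast
    moreover have "(u+u', b+b')\<in>M" using g calculation unfolding goodG_def by blast
    ultimately show "(x + x', a + a') \<in> G"
      using Gin[of "u+u'" "b+b'" "c+c'"] by (simp add: algebra_simps)
  next
    fix x a k assume "(x,a)\<in>G"
    then obtain u b c where "(u,b)\<in>M" "x = u + c *\<^sub>R y" "a = b + c*t" unfolding G_def by blast
    moreover have "(k *\<^sub>R u, k*b)\<in>M" using g calculation unfolding goodG_def by blast
    ultimately show "(k *\<^sub>R x, k * a) \<in> G"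
      using Gin[of "k *\<^sub>R u" "k*b" "k*c"] by (simp add: algebra_simps)
  next
    fix x a assume "(x,a)\<in>G"
    then show "a \<le> norm x" using bound unfolding G_def by blast
  next
    show "(z, norm z) \<in> G" using Mne Gin[of z "norm z" 0] by simp
  qed
  moreover have "M \<subseteq> G" using Gin[where c=0] by auto
  moreover have "(0,0) \<in> M" using g Mne unfolding goodG_def by (metis mult_zero_left scale_zero_left)
  then have "(y, t) \<in> G" using Gin[of 0 0 1] by simp
  ultimately show ?thesis using y by blast
qed

lemma hahn_banach_norm:
  fixes z :: "'a::real_normed_vector"
  shows "\<exists>f. bounded_linear f \<and> f z = norm z \<and> (\<forall>x. \<bar>f x\<bar> \<le> norm x)"
proof -
  let ?A = "{G. goodG z G}"
  have "\<forall>C\<in>chains ?A. \<exists>U\<in>?A. \<forall>X\<in>C. X \<subseteq> U"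
  proof
    fix C assume C: "C \<in> chains ?A"
    show "\<exists>U\<in>?A. \<forall>X\<in>C. X \<subseteq> U"
    proof (cases "C = {}")
      case True
      have "goodG z (range (\<lambda>c. (c *\<^sub>R z, c * norm z)))"
        unfolding goodG_def
      proof (intro conjI allI impI)
        fix x a y b assume "(x,a) \<in> range (\<lambda>c. (c *\<^sub>R z, c * norm z))" "(y,b) \<in> range (\<lambda>c. (c *\<^sub>R z, c * norm z))"
        then obtain c d where "x = c *\<^sub>R z" "a = c * norm z" "y = d *\<^sub>R z" "b = d * norm z" by auto
        then show "(x+y,a+b) \<in> range (\<lambda>c. (c *\<^sub>R z, c * norm z))"
          by (auto intro!: image_eqI[of _ _ "c+d"] simp: algebra_simps)
      next
        fix x a k assume "(x,a) \<in> range (\<lambda>c. (c *\<^sub>R z, c * norm z))"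
        then obtain c where "x = c *\<^sub>R z" "a = c * norm z" by auto
        then show "(k *\<^sub>R x,k*a) \<in> range (\<lambda>c. (c *\<^sub>R z, c * norm z))"
          by (auto intro!: image_eqI[of _ _ "k*c"] simp: algebra_simps)
      next
        fix x a assume "(x,a) \<in> range (\<lambda>c. (c *\<^sub>R z, c * norm z))"
        then obtain c where "x = c *\<^sub>R z" "a = c * norm z" by auto
        then show "a \<le> norm x" by (simp add: mult_right_mono)
      next
        show "(z, norm z) \<in> range (\<lambda>c. (c *\<^sub>R z, c * norm z))" by (auto intro!: image_eqI[of _ _ 1])
      qed
      then show ?thesis using True by blast
    next
      case False
      have ch: "X \<subseteq> Y \<or> Y \<subseteq> X" if "X\<in>C" "Y\<in>C" for X Y
        using C that unfolding chains_def chain_subset_def by blast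
      have gC: "goodG z X" if "X \<in> C" for X using C that unfolding chains_def by blast
      have "goodG z (\<Union>C)" unfolding goodG_def
      proof (intro conjI allI impI)
        fix x a y b assume "(x,a)\<in>\<Union>C" "(y,b)\<in>\<Union>C"
        then obtain X Y where "X\<in>C" "Y\<in>C" "(x,a)\<in>X" "(y,b)\<in>Y" by blast
        then show "(x+y,a+b)\<in>\<Union>C" using ch gC unfolding goodG_def by (metis UnionI subsetD)
      next
        fix x a c assume "(x,a)\<in>\<Union>C" then show "(c *\<^sub>R x, c*a)\<in>\<Union>C"
          using gC unfolding goodG_def by blast
      next
        fix x a assume "(x,a)\<in>\<Union>C" then show "a \<le> norm x"
          using gC unfolding goodG_def by blast
      next
        show "(z, norm z) \<in> \<Union>C" using False gC unfolding goodG_def by blast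
      qed
      then show ?thesis by blast
    qed
  qed
  from Zorn_Lemma2[OF this] obtain M where M: "goodG z M" and max: "\<forall>X. goodG z X \<longrightarrow> M \<subseteq> X \<longrightarrow> X = M"
    by blast
  have dom: "\<exists>a. (x,a)\<in>M" for x
    using goodG_extend[OF M, of x] max by blast
  define f where "f x = (SOME a. (x,a)\<in>M)" for x
  have fM: "(x, f x) \<in> M" for x unfolding f_def using dom by (rule someI_ex)
  have feq: "f x = a" if "(x,a)\<in>M" for x a using goodG_fun[OF M fM that] .
  have add: "f (x + y) = f x + f y" for x y
    using M fM feq unfolding goodG_def by blast
  have scl: "f (c *\<^sub>R x) = c * f x" for c x
    using M fM feq unfolding goodG_def by blast
  have le: "f x \<le> norm x" for x using M fM unfolding goodG_def by blast
  have abs: "\<bar>f x\<bar> \<le> norm x" for x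
    using le[of x] le[of "(-1) *\<^sub>R x"] scl[of "-1" x] by simp
  have "bounded_linear f"
    by (rule bounded_linear_intro[where K=1]) (use add scl abs in auto)
  moreover have "f z = norm z" using M feq unfolding goodG_def by blast
  ultimately show ?thesis using abs by blast
qed

lemma topspace_weak: "topspace (weak_topology :: 'a::real_normed_vector topology) = UNIV"
proof -
  have "(UNIV :: 'a set) \<in> {{x. f x \<in> U} | f U. bounded_linear (f :: 'a \<Rightarrow> real) \<and> open U}"
    by (rule CollectI, rule exI[of _ "\<lambda>_. 0"], rule exI[of _ UNIV]) auto
  then have "(UNIV :: 'a set) \<subseteq> \<Union>{{x. f x \<in> U} | f U. bounded_linear (f :: 'a \<Rightarrow> real) \<and> open U}"
    by (rule Union_upper)
  then show ?thesis unfolding weak_topology_def topology_generated_by_topspace by (rule top.extremum_uniqueI)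
qed

lemma weak_cont:
  fixes f :: "'a::real_normed_vector \<Rightarrow> real"
  assumes "bounded_linear f"
  shows "continuous_map weak_topology euclideanreal f"
  unfolding continuous_map_def topspace_weak
proof (intro conjI allI impI)
  fix U :: "real set" assume "openin euclideanreal U"
  then have "open U" by simp
  then have "{x. f x \<in> U} \<in> {{x. f x \<in> U} | f U. bounded_linear (f :: 'a \<Rightarrow> real) \<and> open U}"
    using assms by blast
  then have "openin weak_topology {x. f x \<in> U}"
    unfolding weak_topology_def by (rule topology_generated_by_Basis)
  moreover have "{x \<in> UNIV. f x \<in> U} = {x. f x \<in> U}" by simp
  ultimately show "openin weak_topology {x \<in> UNIV. f x \<in> U}" by simp
qed auto

lemma weak_limit:
  fixes y :: "nat \<Rightarrow> 'a::real_normed_vector"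
  assumes "weakly_convergent_to y l"
  shows "limitin weak_topology y l sequentially"
  unfolding limitin_def topspace_weak
proof (intro conjI allI impI)
  fix U assume UU: "openin weak_topology U \<and> l \<in> U"
  then have lU: "l \<in> U" by blast
  from UU have g0: "generate_topology_on {{x. f x \<in> U} | f U. bounded_linear (f :: 'a \<Rightarrow> real) \<and> open U} U" 
    unfolding weak_topology_def openin_topology_generated_by_iff by blast
  from g0 lU show "eventually (\<lambda>n. y n \<in> U) sequentially"
  proof (induction rule: generate_topology_on.induct)
    case Empty then show ?case by simp
  next
    case (Int a b)
    from Int.prems have la: "l \<in> a" and lb: "l \<in> b" by auto
    have "eventually (\<lambda>n. y n \<in> a) sequentially" by (rule Int.IH(1)[OF la])
    moreover have "eventually (\<lambda>n. y n \<in> b) sequentially" by (rule Int.IH(2)[OF lb])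
    ultimately show ?case by (rule eventually_conj[THEN eventually_mono]) simp
  next
    case (UN K)
    from UN.prems obtain k where kK: "k \<in> K" and lk: "l \<in> k" by blast
    have "eventually (\<lambda>n. y n \<in> k) sequentially" by (rule UN.IH[OF kK lk])
    then show ?case by (rule eventually_mono) (use kK in blast)
  next
    case (Basis s)
    from Basis.hyps have "\<exists>f V. s = {x. f x \<in> V} \<and> bounded_linear (f :: 'a \<Rightarrow> real) \<and> open V"
      by (simp only: mem_Collect_eq)
    then obtain f V where fV: "s = {x. f x \<in> V}" "bounded_linear (f :: 'a \<Rightarrow> real)" "open V" by blast
    have lim: "(\<lambda>n. f (y n)) \<longlonglongrightarrow> f l" using assms fV(2) unfolding weakly_convergent_to_def by blast
    have "f l \<in> V" using Basis.prems fV(1) by simp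
    from topological_tendstoD[OF lim fV(3) this]
    have "eventually (\<lambda>n. f (y n) \<in> V) sequentially" .
    then show ?case using fV(1) by simp
  qed
qed simp

lemma part1:
  fixes E :: "'a::banach set"
  assumes wc: "weakly_compact E" and nm: "\<not> has_max_length_vector E"
  shows "\<not> has_max_length_vector (closure (convex hull E))"
proof
  assume "has_max_length_vector (closure (convex hull E))"
  then obtain z where z: "z \<in> closure (convex hull E)" and zmax: "\<forall>e\<in>closure (convex hull E). norm e \<le> norm z"
    unfolding has_max_length_vector_def by blast
  obtain f where f: "bounded_linear f" "f z = norm z" "\<forall>x. \<bar>f x\<bar> \<le> norm x"
    using hahn_banach_norm by blast
  have Ene: "E \<noteq> {}" using z by (metis closure_empty convex_hull_empty empty_iff)
  have "compactin euclideanreal (f ` E)"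
    using image_compactin[OF wc[unfolded weakly_compact_def] weak_cont[OF f(1)]] .
  then have "compact (f ` E)" by simp
  moreover have "f ` E \<noteq> {}" using Ene by simp
  ultimately obtain s where s: "s \<in> f ` E" "\<forall>t\<in>f ` E. t \<le> s"
    using compact_attains_sup[of "f ` E"] by blast
  then obtain e0 where e0: "e0 \<in> E" "\<forall>e\<in>E. f e \<le> f e0" by auto
  interpret lf: bounded_linear f by (rule f(1))
  have cv: "convex {x. f x \<le> f e0}"
    unfolding convex_def
  proof (intro ballI allI impI)
    fix a b and u v :: real
    assume ab: "a \<in> {x. f x \<le> f e0}" "b \<in> {x. f x \<le> f e0}" and uv: "0 \<le> u" "0 \<le> v" "u + v = 1"
    have "u * f a + v * f b \<le> u * f e0 + v * f e0"
      using ab uv by (intro add_mono mult_left_mono) auto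
    also have "\<dots> = f e0" using uv(3) by (metis distrib_right mult_1)
    finally show "u *\<^sub>R a + v *\<^sub>R b \<in> {x. f x \<le> f e0}" by (simp add: lf.add lf.scale)
  qed
  have "convex hull E \<subseteq> {x. f x \<le> f e0}" by (rule hull_minimal) (use e0 cv in auto)
  moreover have "closed {x. f x \<le> f e0}"
    by (intro closed_Collect_le continuous_intros lf.continuous_on continuous_on_id)
  ultimately have "closure (convex hull E) \<subseteq> {x. f x \<le> f e0}" by (rule closure_minimal)
  then have "f z \<le> f e0" using z by blast
  then have "norm z \<le> norm e0" using f(2) f(3)[rule_format, of e0] by linarith
  moreover have "E \<subseteq> closure (convex hull E)"
    by (rule subset_trans[OF hull_subset closure_subset])
  then have "\<forall>e\<in>E. norm e \<le> norm z" using zmax by (meson subsetD)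
  ultimately have "\<forall>e\<in>E. norm e \<le> norm e0" by fastforce
  then show False using nm e0(1) unfolding has_max_length_vector_def by blast
qed

theorem mainTheorem3:
  fixes E :: "'a::banach set"
  shows "(weakly_compact E \<and> \<not> has_max_length_vector E
            \<longrightarrow> \<not> has_max_length_vector (closure (convex hull E)))
       \<and> (\<forall>x :: nat \<Rightarrow> 'a.
            \<not> schur_property TYPE('a) \<and> (\<forall>n\<ge>1. norm (x n) = 1) \<and> weakly_convergent_to x 0
            \<longrightarrow> (let K = closure (convex hull
                     ({(real n / real (n + 1)) *\<^sub>R x n | n. n \<ge> 1} \<union> {0}))
                 in closed K \<and> bounded K \<and> convex K \<and> \<not> remotal_from K 0))"
proof (intro conjI impI allI)
  assume "weakly_compact E \<and> \<not> has_max_length_vector E"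
  then show "\<not> has_max_length_vector (closure (convex hull E))" using part1 by blast
next
  fix x :: "nat \<Rightarrow> 'a"
  assume a: "\<not> schur_property TYPE('a) \<and> (\<forall>n\<ge>1. norm (x n) = 1) \<and> weakly_convergent_to x 0"
  define y where "y n = (real n / real (n + 1)) *\<^sub>R x n" for n
  define F where "F = {(real n / real (n + 1)) *\<^sub>R x n | n. n \<ge> 1} \<union> {0::'a}"
  define K where "K = closure (convex hull F)"
  have ny: "norm (y n) = real n / real (n+1)" if "n \<ge> 1" for n
    using a that unfolding y_def by simp
  have F_eq: "F = insert 0 (range (\<lambda>n. y (Suc n)))"
  proof (rule set_eqI)
    fix w show "w \<in> F \<longleftrightarrow> w \<in> insert 0 (range (\<lambda>n. y (Suc n)))"
    proof
      assume "w \<in> F"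
      then have "w = 0 \<or> (\<exists>n. n \<ge> 1 \<and> w = y n)" unfolding F_def y_def by auto
      then consider "w = 0" | n where "n \<ge> 1" "w = y n" by blast
      then show "w \<in> insert 0 (range (\<lambda>n. y (Suc n)))"
      proof cases
        case 2 then have "w = y (Suc (n - 1))" by simp
        then show ?thesis by blast
      qed simp
    next
      assume "w \<in> insert 0 (range (\<lambda>n. y (Suc n)))"
      then consider "w = 0" | n where "w = y (Suc n)" by blast
      then show "w \<in> F"
      proof cases
        case 2 then show ?thesis unfolding F_def y_def
          by (intro UnI1 CollectI exI[of _ "Suc n"]) simp
      qed (simp add: F_def)
    qed
  qed
  have wy: "weakly_convergent_to (\<lambda>n. y (Suc n)) 0"
    unfolding weakly_convergent_to_def
  proof (intro allI impI)
    fix f :: "'a \<Rightarrow> real" assume f: "bounded_linear f"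
    interpret lf: bounded_linear f by (rule f)
    have "(\<lambda>n. f (x n)) \<longlonglongrightarrow> 0" using a f unfolding weakly_convergent_to_def by (metis lf.zero)
    then have A: "(\<lambda>n. f (x (Suc n))) \<longlonglongrightarrow> 0" by (rule LIMSEQ_Suc)
    have B: "(\<lambda>n. real (Suc n) / real (Suc n + 1)) \<longlonglongrightarrow> 1"
      using LIMSEQ_Suc[OF LIMSEQ_n_over_Suc_n] by simp
    from B A have "(\<lambda>n. real (Suc n) / real (Suc n + 1) * f (x (Suc n))) \<longlonglongrightarrow> 1 * 0"
      by (rule tendsto_mult)
    then show "(\<lambda>n. f (y (Suc n))) \<longlonglongrightarrow> f 0" unfolding y_def by (simp add: lf.scale)
  qed
  have wcF: "weakly_compact F"
    unfolding weakly_compact_def F_eq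
    by (rule compactin_sequence_with_limit[OF weak_limit[OF wy]]) (auto simp: topspace_weak)
  have nmF: "\<not> has_max_length_vector F"
  proof
    assume "has_max_length_vector F"
    then obtain e where e: "e \<in> F" "\<forall>e'\<in>F. norm e' \<le> norm e" unfolding has_max_length_vector_def by blast
    show False
    proof (cases "e = 0")
      case True
      have "y 1 \<in> F" unfolding F_eq using rangeI[of "\<lambda>n. y (Suc n)" 0] by simp
      with e(2) True have "norm (y 1) \<le> 0" by fastforce
      with ny[of 1] show False by simp
    next
      case False
      then obtain n where n: "e = y (Suc n)" using e(1) unfolding F_eq by auto
      have "y (Suc (Suc n)) \<in> F" unfolding F_eq by auto
      with e n have "norm (y (Suc (Suc n))) \<le> norm (y (Suc n))" by blast
      then have "real (Suc (Suc n)) / real (Suc (Suc n) + 1) \<le> real (Suc n) / real (Suc n + 1)"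
        using ny[of "Suc n"] ny[of "Suc (Suc n)"] by simp
      then show False by (simp add: field_simps)
    qed
  qed
  have Fb: "F \<subseteq> cball 0 1"
    unfolding F_eq
  proof (intro subsetI)
    fix w assume "w \<in> insert 0 (range (\<lambda>n. y (Suc n)))"
    then consider "w = 0" | n where "w = y (Suc n)" by blast
    then show "w \<in> cball 0 1"
    proof cases
      case 2
      have "real (Suc n) / real (Suc n + 1) \<le> 1" by simp
      then show ?thesis using 2 ny[of "Suc n"] by simp
    qed simp
  qed
  have Kb: "K \<subseteq> cball 0 1" unfolding K_def
    by (intro closure_minimal hull_minimal Fb convex_cball closed_cball)
  have "closed K \<and> bounded K \<and> convex K \<and> \<not> remotal_from K 0"
  proof (intro conjI)
    show "closed K" unfolding K_def by simp
    show "bounded K" using Kb bounded_cball bounded_subset by blast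
    show "convex K" unfolding K_def by (simp add: convex_closure)
    show "\<not> remotal_from K 0"
    proof
      assume "remotal_from K 0"
      then obtain e0 where e0: "e0 \<in> K" "norm (0 - e0) = farthest_dist 0 K"
        unfolding remotal_from_def by blast
      have bdd: "bdd_above ((\<lambda>e. norm (0 - e)) ` K)"
        using Kb by (intro bdd_aboveI[of _ 1]) auto
      have "\<forall>e\<in>K. norm e \<le> norm e0"
      proof
        fix e assume "e \<in> K"
        have "norm (0 - e) \<le> farthest_dist 0 K"
          unfolding farthest_dist_def using bdd \<open>e \<in> K\<close> by (rule cSUP_upper2) simp
        then show "norm e \<le> norm e0" using e0(2) by simp
      qed
      then have "has_max_length_vector K" using e0(1) unfolding has_max_length_vector_def by blast
      then show False using part1[OF wcF nmF] unfolding K_def by blast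
    qed
  qed
  then show "let K = closure (convex hull
                     ({(real n / real (n + 1)) *\<^sub>R x n | n. n \<ge> 1} \<union> {0}))
                 in closed K \<and> bounded K \<and> convex K \<and> \<not> remotal_from K 0"
    unfolding K_def F_def Let_def .
qed

end
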